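(* Let $U$ be an $r$-dimensional subspace of $\mathbb{R}^d$, $0\ne v\in U^\perp$, $\delta\in(0,1)$, and let $\Omega$ be a list of $m$ indices sampled independently and uniformly with replacement from $[d]$, where $m\ge 4\mu(v)\log(1/\delta)$. Let $\beta=(1+2\log(1/\delta))^2$. Then with probability at least $1-\delta$, $$\|U_\Omega^Tv_\Omega\|_2^2\le\beta\,\frac md\,\frac{r\mu(U)}{d}\,\|v\|_2^2.$$
   Context: For an $r$-dimensional subspace $U\subseteq\mathbb{R}^d$, $\mu(U)=\frac{d}{r}\max_{i\in[d]}\|\mathcal{P}_Ue_i\|_2^2$; for a nonzero $v\in\mathbb{R}^d$, $\mu(v)=d\|v\|_\infty^2/\|v\|_2^2$. For a list $\Omega\in[d]^m$, $v_\Omega\in\mathbb{R}^m$ has $j$th entry $v(\Omega(j))$. Taking $U$ also to denote a $d\times r$ matrix with orthonormal columns spanning $U$, $U_\Omega$ is the $m\times r$ matrix whose $j$th row is row $\Omega(j)$ of $U$. *)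

theory Defs
  imports "HOL-Analysis.Analysis" "HOL-Probability.Probability"
begin

text \<open>A d x r matrix U with orthonormal columns represents the subspace it spans.
  Dimensions are the cardinalities of the finite index types 'd and 'r.\<close>

definition orthonormal_cols :: "real^'r^'d \<Rightarrow> bool" where
  "orthonormal_cols U \<longleftrightarrow> transpose U ** U = mat 1"

definition proj_sub :: "real^'r^'d \<Rightarrow> real^'d \<Rightarrow> real^'d" where
  "proj_sub U x = (U ** transpose U) *v x"

definition coh_sub :: "real^'r^'d \<Rightarrow> real" where
  "coh_sub U = real CARD('d) / real CARD('r) *
     Max (range (\<lambda>i::'d. (norm (proj_sub U (axis i 1)))\<^sup>2))"

definition coh_vec :: "real^'d \<Rightarrow> real" where
  "coh_vec v = real CARD('d) * (infnorm v)\<^sup>2 / (norm v)\<^sup>2"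

text \<open>U_Omega^T v_Omega = sum_j v(Omega j) * (row Omega(j) of U).\<close>
definition sampled_prod :: "real^'r^'d \<Rightarrow> real^'d \<Rightarrow> 'd list \<Rightarrow> real^'r" where
  "sampled_prod U v \<Omega> = (\<Sum>j<length \<Omega>. (v $ (\<Omega> ! j)) *\<^sub>R (U $ (\<Omega> ! j)))"

text \<open>m indices drawn independently and uniformly with replacement from [d].\<close>
definition sample_lists :: "nat \<Rightarrow> 'd::finite list pmf" where
  "sample_lists m = pmf_of_set {xs. length xs = m}"

end

theory Submission imports Defs begin

lemma exp4: fixes h::real assumes "\<bar>h\<bar> \<le> 1"
  shows "\<exists>c. 0 < c \<and> c \<le> 3 \<and> exp h = 1 + h + h^2/2 + h^3/6 + c * h^4/24"
proof -
  obtain t where t: "\<bar>t\<bar> \<le> \<bar>h\<bar>" "exp h = (\<Sum>m<4. (h ^ m) / fact m) + (exp t / fact 4) * h ^ 4"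
    using Maclaurin_exp_le[of h 4] by blast
  have "exp t \<le> exp 1" using t assms by simp
  also have "\<dots> \<le> 3" by (rule exp_le)
  finally have "exp t \<le> 3" .
  moreover have "(\<Sum>m<4. (h ^ m) / fact m) = 1 + h + h^2/2 + h^3/6"
    by (simp add: eval_nat_numeral fact_numeral)
  moreover have "fact 4 = (24::real)" by (simp add: eval_nat_numeral fact_numeral)
  ultimately show ?thesis using t by (intro exI[of _ "exp t"]) auto
qed

lemma pow_facts: fixes h::real assumes "\<bar>h\<bar> \<le> 1"
  shows "h^4 \<le> h^2" "h^3 \<le> h^2" "0 \<le> h^4" "0 \<le> h^2"
proof -
  have h2: "h^2 \<le> 1" using assms by (simp add: abs_square_le_1)
  have "h^4 = h^2 * h^2" by algebra
  also have "\<dots> \<le> h^2 * 1" by (rule mult_left_mono[OF h2]) simp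
  finally show "h^4 \<le> h^2" by simp
  have "h^3 = h * h^2" by algebra
  also have "\<dots> \<le> \<bar>h\<bar> * h^2" by (rule mult_right_mono) auto
  also have "\<dots> \<le> 1 * h^2" by (rule mult_right_mono[OF assms]) simp
  finally show "h^3 \<le> h^2" by simp
  show "0 \<le> h^4" "0 \<le> h^2" by simp_all
qed

lemma cosh_le_sq: fixes h::real assumes "\<bar>h\<bar> \<le> 1" shows "cosh h \<le> 1 + 5/8 * h^2"
proof -
  obtain c1 where c1: "0 < c1" "c1 \<le> 3" "exp h = 1 + h + h^2/2 + h^3/6 + c1 * h^4/24"
    using exp4[OF assms] by blast
  obtain c2 where c2: "0 < c2" "c2 \<le> 3" "exp (-h) = 1 + (-h) + (-h)^2/2 + (-h)^3/6 + c2 * (-h)^4/24"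
    using exp4[of "-h"] assms by auto
  note p = pow_facts[OF assms]
  have a: "c1 * h^4 \<le> 3 * h^2" using c1 p by (meson mult_mono order.trans less_imp_le)
  have b: "c2 * h^4 \<le> 3 * h^2" using c2 p by (meson mult_mono order.trans less_imp_le)
  have "cosh h = (exp h + exp (-h))/2" by (simp add: cosh_field_def)
  also have "\<dots> = 1 + h^2/2 + (c1 + c2) * h^4 / 48" using c1 c2 by (simp add: field_simps)
  finally show ?thesis using a b by (simp add: algebra_simps)
qed

lemma sinh_le_sq: fixes h::real assumes "\<bar>h\<bar> \<le> 1" shows "sinh h \<le> h + 1/4 * h^2"
proof -
  obtain c1 where c1: "0 < c1" "c1 \<le> 3" "exp h = 1 + h + h^2/2 + h^3/6 + c1 * h^4/24"
    using exp4[OF assms] by blast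
  obtain c2 where c2: "0 < c2" "c2 \<le> 3" "exp (-h) = 1 + (-h) + (-h)^2/2 + (-h)^3/6 + c2 * (-h)^4/24"
    using exp4[of "-h"] assms by auto
  note p = pow_facts[OF assms]
  have a: "c1 * h^4 \<le> 3 * h^2" using c1 p by (meson mult_mono order.trans less_imp_le)
  have b: "0 \<le> c2 * h^4" using c2 p by simp
  have "sinh h = (exp h - exp (-h))/2" by (simp add: sinh_field_def)
  also have "\<dots> = h + h^3/6 + c1 * h^4 / 48 - c2 * h^4 / 48" using c1 c2 by (simp add: field_simps)
  finally show ?thesis using a b p by linarith
qed

lemma sinh_le_mult_cosh: fixes a::real assumes "0 \<le> a" shows "sinh a \<le> a * cosh a"
proof -
  have "(\<lambda>x. sinh x - x * cosh x) a \<le> (\<lambda>x. sinh x - x * cosh x) 0"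
  proof (rule DERIV_nonpos_imp_nonincreasing[OF assms])
    fix x assume "0 \<le> x" "x \<le> a"
    show "\<exists>y. ((\<lambda>x. sinh x - x * cosh x) has_real_derivative y) (at x) \<and> y \<le> 0"
      by (rule exI[of _ "cosh x - (cosh x + x * sinh x)"])
         (auto intro!: derivative_eq_intros simp: \<open>0 \<le> x\<close>)
  qed
  then show ?thesis by simp
qed

definition gfun :: "real \<Rightarrow> real" where "gfun a = (if a = 0 then 0 else sinh a / a)"

lemma core1d: fixes a \<rho> b p :: real
  assumes a: "0 \<le> a" and hb: "\<bar>\<rho> - a\<bar> \<le> b" "b \<le> 1" and hp: "2*a*(\<rho>-a) \<le> 2*p + b^2"
  shows "cosh \<rho> \<le> cosh a + gfun a * p + 11/8 * b^2 * cosh a"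
proof -
  define h where "h = \<rho> - a"
  have h1: "\<bar>h\<bar> \<le> 1" using hb h_def by simp
  have hh: "h^2 \<le> b^2" using hb h_def by (metis abs_ge_zero power2_abs power_mono)
  have ca: "0 < cosh a" by simp
  have sa: "0 \<le> sinh a" using a by simp
  have "cosh \<rho> = cosh a * cosh h + sinh a * sinh h" unfolding h_def by (simp add: cosh_add[symmetric])
  also have "\<dots> \<le> cosh a * (1 + 5/8 * h^2) + sinh a * (h + 1/4 * h^2)"
    by (intro add_mono mult_left_mono cosh_le_sq sinh_le_sq h1) (use sa in auto)
  also have "\<dots> = cosh a + 5/8 * (cosh a * h^2) + sinh a * h + 1/4 * (sinh a * h^2)"
    by (simp add: algebra_simps)
  also have "\<dots> \<le> cosh a + 5/8 * (cosh a * b^2) + (gfun a * p + 1/2 * (cosh a * b^2)) + 1/4 * (cosh a * b^2)"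
  proof -
    have A: "cosh a * h^2 \<le> cosh a * b^2" using hh ca by simp
    have B: "sinh a * h^2 \<le> cosh a * b^2"
      by (rule mult_mono[OF sinh_le_cosh_real hh]) auto
    have C: "sinh a * h \<le> gfun a * p + 1/2 * (cosh a * b^2)"
    proof (cases "a = 0")
      case True then show ?thesis by (simp add: gfun_def)
    next
      case False
      then have apos: "0 < a" using a by simp
      have "sinh a * h = (sinh a / a) * (a * h)" using apos by simp
      also have "\<dots> \<le> (sinh a / a) * (p + b^2/2)"
        by (rule mult_left_mono) (use hp h_def apos sa in auto)
      also have "\<dots> = gfun a * p + (sinh a / a) * b^2 / 2" using False by (simp add: gfun_def algebra_simps)
      also have "(sinh a / a) \<le> cosh a" using sinh_le_mult_cosh[OF a] apos by (simp add: divide_le_eq mult.commute)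
      hence "(sinh a / a) * b^2 / 2 \<le> cosh a * b^2 / 2"
        by (intro divide_right_mono mult_right_mono) auto
      finally show ?thesis by simp
    qed
    show ?thesis using A B C by linarith
  qed
  also have "\<dots> = cosh a + gfun a * p + 11/8 * b^2 * cosh a" by (simp add: algebra_simps)
  finally show ?thesis .
qed

lemma cosh_vec: fixes s x :: "'a::real_inner" assumes "norm x \<le> 1"
  shows "cosh (norm (s + x)) \<le> cosh (norm s) + gfun (norm s) * (s \<bullet> x) + 11/8 * (norm x)^2 * cosh (norm s)"
proof (rule core1d)
  show "0 \<le> norm s" by simp
  show "\<bar>norm (s + x) - norm s\<bar> \<le> norm x"
    by (metis add_diff_cancel_left' norm_triangle_ineq3)
  show "norm x \<le> 1" by fact
  have e: "(norm (s+x))^2 = (norm s)^2 + 2*(s \<bullet> x) + (norm x)^2"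
    by (simp add: power2_norm_eq_inner inner_add inner_commute)
  have "2 * norm s * (norm (s+x) - norm s) = (norm (s+x))^2 - (norm s)^2 - (norm (s+x) - norm s)^2"
    by algebra
  then show "2 * norm s * (norm (s+x) - norm s) \<le> 2 * (s \<bullet> x) + (norm x)^2"
    using e by (smt (verit) zero_le_power2)
qed

definition Fw :: "('d \<Rightarrow> 'v::real_vector) \<Rightarrow> 'd list \<Rightarrow> 'v" where
  "Fw w xs = (\<Sum>j<length xs. w (xs ! j))"

lemma Fw_Cons: "Fw w (x # xs) = w x + Fw w xs"
  unfolding Fw_def length_Cons by (subst sum.lessThan_Suc_shift) simp

lemma Fw_Nil: "Fw w [] = 0" unfolding Fw_def by simp

lemma sum_lists_Suc:
  "(\<Sum>xs\<in>{xs::'a::finite list. length xs = Suc m}. f xs) = (\<Sum>x\<in>UNIV. \<Sum>xs\<in>{xs. length xs = m}. f (x # xs))"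
proof -
  have e: "{xs::'a list. length xs = Suc m} = (\<lambda>(x,xs). x # xs) ` (UNIV \<times> {xs. length xs = m})"
    by (auto simp: length_Suc_conv image_iff)
  have i: "inj_on (\<lambda>(x,xs). x # xs) (UNIV \<times> {xs::'a list. length xs = m})"
    by (auto simp: inj_on_def)
  show ?thesis unfolding e sum.reindex[OF i] by (subst sum.cartesian_product) (simp add: case_prod_beta)
qed

lemma card_lists: "card {xs::'a::finite list. length xs = m} = CARD('a)^m"
  using card_lists_length_eq[of "UNIV::'a set" m] by simp

lemma finite_lists: "finite {xs::'a::finite list. length xs = m}"
  using finite_lists_length_eq[of "UNIV::'a set" m] by simp

lemma lists_0: "{xs. length xs = 0} = {[]}" by auto

lemma M2:
  fixes w :: "'d::finite \<Rightarrow> 'v::real_inner"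
  assumes z: "(\<Sum>a\<in>UNIV. w a) = 0"
  shows "(\<Sum>xs\<in>{xs. length xs = m}. (norm (Fw w xs))^2)
     = real m * real CARD('d)^m / real CARD('d) * (\<Sum>a\<in>UNIV. (norm (w a))^2)"
proof (induction m)
  case 0 then show ?case by (simp add: lists_0 Fw_Nil)
next
  case (Suc m)
  let ?A = "{xs::'d list. length xs = m}"
  let ?W = "\<Sum>a\<in>UNIV. (norm (w a))^2"
  have cross: "(\<Sum>x\<in>UNIV. w x \<bullet> Fw w xs) = 0" for xs
    by (simp add: inner_sum_left[symmetric] z)
  have "(\<Sum>xs\<in>{xs. length xs = Suc m}. (norm (Fw w xs))^2)
      = (\<Sum>x\<in>UNIV. \<Sum>xs\<in>?A. (norm (w x + Fw w xs))^2)"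
    by (simp add: sum_lists_Suc Fw_Cons)
  also have "\<dots> = (\<Sum>x\<in>UNIV. \<Sum>xs\<in>?A. (norm (w x))^2 + 2 * (w x \<bullet> Fw w xs) + (norm (Fw w xs))^2)"
    by (simp add: power2_norm_eq_inner inner_add inner_commute algebra_simps)
  also have "\<dots> = (\<Sum>x\<in>UNIV. \<Sum>xs\<in>?A. (norm (w x))^2) + 2 * (\<Sum>xs\<in>?A. \<Sum>x\<in>UNIV. w x \<bullet> Fw w xs)
      + (\<Sum>x\<in>(UNIV::'d set). \<Sum>xs\<in>?A. (norm (Fw w xs))^2)"
    by (simp add: sum.distrib sum_distrib_left sum.swap[of _ "UNIV::'d set"])
  also have "\<dots> = real CARD('d)^m * ?W + real CARD('d) * (\<Sum>xs\<in>?A. (norm (Fw w xs))^2)"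
    by (simp add: cross card_lists sum_distrib_left[symmetric] sum_distrib_right[symmetric] mult.commute)
  also have "\<dots> = real (Suc m) * real CARD('d)^(Suc m) / real CARD('d) * ?W"
    unfolding Suc.IH by (simp add: field_simps)
  finally show ?case .
qed

lemma Pin:
  fixes w :: "'d::finite \<Rightarrow> 'v::real_inner"
  assumes z: "(\<Sum>a\<in>UNIV. w a) = 0" and b: "\<And>a. norm (w a) \<le> 1"
  shows "(\<Sum>xs\<in>{xs. length xs = m}. cosh (norm (Fw w xs)))
     \<le> (real CARD('d) + 11/8 * (\<Sum>a\<in>UNIV. (norm (w a))^2))^m"
proof (induction m)
  case 0 then show ?case by (simp add: lists_0 Fw_Nil)
next
  case (Suc m)
  let ?A = "{xs::'d list. length xs = m}"
  let ?W = "\<Sum>a\<in>UNIV. (norm (w a))^2"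
  have cross: "(\<Sum>x\<in>UNIV. Fw w xs \<bullet> w x) = 0" for xs
    by (simp add: inner_sum_right[symmetric] z)
  have "(\<Sum>xs\<in>{xs. length xs = Suc m}. cosh (norm (Fw w xs)))
      = (\<Sum>xs\<in>?A. \<Sum>x\<in>UNIV. cosh (norm (Fw w xs + w x)))"
    by (simp add: sum_lists_Suc Fw_Cons sum.swap[of _ "UNIV::'d set"] add.commute)
  also have "\<dots> \<le> (\<Sum>xs\<in>?A. \<Sum>x\<in>UNIV. cosh (norm (Fw w xs)) + gfun (norm (Fw w xs)) * (Fw w xs \<bullet> w x)
       + 11/8 * (norm (w x))^2 * cosh (norm (Fw w xs)))"
    by (intro sum_mono cosh_vec b)
  also have "\<dots> = (\<Sum>xs\<in>?A. (real CARD('d) + 11/8 * ?W) * cosh (norm (Fw w xs)))"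
  proof (rule sum.cong[OF refl])
    fix xs :: "'d list"
    let ?c = "cosh (norm (Fw w xs))"
    have "(\<Sum>x\<in>UNIV. ?c + gfun (norm (Fw w xs)) * (Fw w xs \<bullet> w x) + 11/8 * (norm (w x))^2 * ?c)
       = (\<Sum>x\<in>(UNIV::'d set). ?c) + gfun (norm (Fw w xs)) * (\<Sum>x\<in>UNIV. Fw w xs \<bullet> w x) + (\<Sum>x\<in>UNIV. 11/8 * (norm (w x))^2 * ?c)"
      by (simp add: sum.distrib sum_distrib_left)
    also have "\<dots> = real CARD('d) * ?c + 11/8 * ?W * ?c"
    proof -
      have "(\<Sum>x\<in>UNIV. 11/8 * (norm (w x))^2 * ?c) = 11/8 * ?W * ?c"
        by (simp add: sum_distrib_right sum_distrib_left mult.assoc)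
      then show ?thesis by (simp add: cross)
    qed
    finally show "(\<Sum>x\<in>UNIV. ?c + gfun (norm (Fw w xs)) * (Fw w xs \<bullet> w x) + 11/8 * (norm (w x))^2 * ?c)
       = (real CARD('d) + 11/8 * ?W) * ?c" by (simp add: algebra_simps)
  qed
  also have "\<dots> = (real CARD('d) + 11/8 * ?W) * (\<Sum>xs\<in>?A. cosh (norm (Fw w xs)))"
    by (simp add: sum_distrib_left)
  also have "\<dots> \<le> (real CARD('d) + 11/8 * ?W) * (real CARD('d) + 11/8 * ?W)^m"
    by (rule mult_left_mono[OF Suc.IH]) (simp add: add_nonneg_nonneg sum_nonneg)
  finally show ?case by simp
qed

lemma sp_Fw: "sampled_prod U v xs = Fw (\<lambda>a. v $ a *\<^sub>R U $ a) xs"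
  unfolding sampled_prod_def Fw_def by simp

lemma sum_rows_zero:
  fixes U :: "real^'r^'d" and v :: "real^'d"
  assumes "transpose U *v v = 0"
  shows "(\<Sum>a\<in>UNIV. v $ a *\<^sub>R U $ a) = 0"
proof -
  have "(\<Sum>a\<in>UNIV. v $ a *\<^sub>R U $ a) = transpose U *v v"
    by (simp add: vec_eq_iff matrix_vector_mult_def transpose_def sum_component mult.commute)
  then show ?thesis using assms by simp
qed

lemma norm_orth:
  fixes U :: "real^'r^'d"
  assumes "orthonormal_cols U"
  shows "norm (U *v y) = norm y"
proof -
  have "(U *v y) \<bullet> (U *v y) = ((U *v y) v* U) \<bullet> y" by (rule dot_lmul_matrix[symmetric])
  also have "(U *v y) v* U = (transpose U ** U) *v y"
    by (metis transpose_matrix_vector matrix_vector_mul_assoc)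
  also have "\<dots> = y" using assms by (simp add: orthonormal_cols_def)
  finally show ?thesis by (simp add: norm_eq_sqrt_inner)
qed

lemma proj_axis:
  fixes U :: "real^'r^'d"
  assumes "orthonormal_cols U"
  shows "norm (proj_sub U (axis a 1)) = norm (U $ a)"
proof -
  have "transpose U *v axis a 1 = U $ a"
    by (simp add: vec_eq_iff matrix_vector_mult_def transpose_def axis_def if_distrib cong: if_cong)
  then have "proj_sub U (axis a 1) = U *v (U $ a)"
    unfolding proj_sub_def by (metis matrix_vector_mul_assoc)
  then show ?thesis using norm_orth[OF assms] by simp
qed

lemma row_le_Max:
  fixes U :: "real^'r^'d"
  assumes "orthonormal_cols U"
  shows "(norm (U $ a))^2 \<le> Max (range (\<lambda>i::'d. (norm (proj_sub U (axis i 1)))\<^sup>2))"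
  using proj_axis[OF assms, of a, symmetric]
  by (intro Max_ge) auto

lemma exp_le_sq: fixes L::real assumes "0 \<le> L" "L \<le> 4" shows "exp L \<le> (1 + 2*L)^2"
proof -
  define y where "y = L/4"
  have y: "0 \<le> y" "y \<le> 1" using assms y_def by auto
  have e: "exp y \<le> 1 + y + y^2" by (rule exp_bound[OF y])
  have p: "y^2 \<le> y" "y^3 \<le> y" "y^4 \<le> y" using y
    by (simp_all add: power_le_one mult_left_le_one_le power2_eq_square
        power3_eq_cube eval_nat_numeral mult_le_one mult_left_le)
  have "exp L = (exp y)^4" unfolding y_def by (simp add: exp_of_nat_mult[symmetric])
  also have "\<dots> \<le> (1 + y + y^2)^4" by (rule power_mono[OF e]) simp
  also have "\<dots> = ((1 + y + y^2)^2)^2" by algebra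
  also have "\<dots> \<le> (1 + 8*y)^2"
  proof (rule power_mono)
    have "(1 + y + y^2)^2 = 1 + 2*y + 3*y^2 + 2*y^3 + y^4" by algebra
    then show "(1 + y + y^2)^2 \<le> 1 + 8*y" using p by linarith
  qed simp
  also have "1 + 8*y = 1 + 2*L" using y_def by simp
  finally show ?thesis .
qed

lemma final_ineq: fixes L::real assumes "4 \<le> L"
  shows "2 * exp (11/2 * L - 2 * sqrt L * (1 + 2*L)) \<le> exp (-L)"
proof -
  define s where "s = sqrt L"
  have s: "2 \<le> s" using assms s_def real_sqrt_le_mono[of 4 L] by simp
  have L: "L = s^2" using s_def assms by simp
  have "2 * s^2 \<le> s * s^2" using s by (intro mult_right_mono) auto
  then have a: "8 * s^2 \<le> 4 * s^3" by (simp add: power3_eq_cube power2_eq_square)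
  have b: "1 + 11/2 * L - 2 * s * (1 + 2*L) \<le> -L"
  proof -
    have "2 * s * (1 + 2 * L) = 2 * s + 4 * (s ^ 3)" unfolding L by algebra
    moreover have "0 \<le> s^2" by simp
    ultimately show ?thesis using a s unfolding L by linarith
  qed
  have "2 * exp (11/2 * L - 2 * sqrt L * (1 + 2*L)) \<le> exp 1 * exp (11/2 * L - 2 * sqrt L * (1 + 2*L))"
    using exp_ge_add_one_self[of 1] by (intro mult_right_mono) auto
  also have "\<dots> = exp (1 + 11/2 * L - 2 * s * (1 + 2*L))" by (simp add: exp_add[symmetric] s_def algebra_simps)
  also have "\<dots> \<le> exp (-L)" using b by simp
  finally show ?thesis .
qed

theorem lemma4:
  fixes U :: "real^'r^'d" and v :: "real^'d" and \<delta> :: real and m :: nat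
  assumes "orthonormal_cols U"
    and "transpose U *v v = 0"
    and "v \<noteq> 0"
    and "0 < \<delta>" and "\<delta> < 1"
    and "real m \<ge> 4 * coh_vec v * ln (1 / \<delta>)"
  shows "measure_pmf.prob (sample_lists m)
           {\<Omega>. (norm (sampled_prod U v \<Omega>))\<^sup>2 \<le>
                (1 + 2 * ln (1 / \<delta>))\<^sup>2 * (real m / real CARD('d)) *
                (real CARD('r) * coh_sub U / real CARD('d)) * (norm v)\<^sup>2}
         \<ge> 1 - \<delta>"
proof -
  note orth = assms(1)
  define D where "D = real CARD('d)"
  define Mx where "Mx = Max (range (\<lambda>i::'d. (norm (proj_sub U (axis i 1)))\<^sup>2))"
  define L where "L = ln (1 / \<delta>)"
  define w where "w = (\<lambda>a. v $ a *\<^sub>R U $ a)"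
  define W where "W = (\<Sum>a\<in>UNIV. (norm (w a))^2)"
  define \<sigma>2 where "\<sigma>2 = real m / D * Mx * (norm v)^2"
  define K where "K = (1 + 2 * L)^2 * \<sigma>2"
  define A where "A = {xs::'d list. length xs = m}"
  define B where "B = {xs \<in> A. \<not> (norm (Fw w xs))^2 \<le> K}"
  define G where "G = {\<Omega>. (norm (sampled_prod U v \<Omega>))\<^sup>2 \<le>
                (1 + 2 * ln (1 / \<delta>))\<^sup>2 * (real m / real CARD('d)) *
                (real CARD('r) * coh_sub U / real CARD('d)) * (norm v)\<^sup>2}"
  have D1: "1 \<le> D" unfolding D_def by simp
  have Dpos: "0 < D" using D1 by simp
  have Lpos: "0 < L" unfolding L_def using assms(4,5) by simp
  have dL: "\<delta> = exp (-L)" unfolding L_def using assms(4) by (simp add: ln_div)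
  have Mx0: "0 \<le> Mx" unfolding Mx_def using row_le_Max[OF orth] by (meson order.trans zero_le_power2)
  have wz: "(\<Sum>a\<in>UNIV. w a) = 0" unfolding w_def by (rule sum_rows_zero[OF assms(2)])
  have nw: "(norm (w a))^2 = (v $ a)^2 * (norm (U $ a))^2" for a
    unfolding w_def by (simp add: power_mult_distrib)
  have nv: "(norm v)^2 = (\<Sum>a\<in>UNIV. (v $ a)^2)"
    unfolding power2_norm_eq_inner inner_vec_def by (simp add: power2_eq_square)
  have WM: "W \<le> Mx * (norm v)^2"
  proof -
    have "W \<le> (\<Sum>a\<in>UNIV. (v $ a)^2 * Mx)"
      unfolding W_def nw using row_le_Max[OF orth] unfolding Mx_def
      by (intro sum_mono mult_left_mono) auto
    also have "\<dots> = Mx * (norm v)^2" by (simp add: nv sum_distrib_left mult.commute)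
    finally show ?thesis .
  qed
  have W0: "0 \<le> W" unfolding W_def by (simp add: sum_nonneg)
  have mW: "real m / D * W \<le> \<sigma>2" unfolding \<sigma>2_def using WM Dpos
    by (simp add: mult.assoc mult_left_mono divide_right_mono)
  have \<sigma>0: "0 \<le> \<sigma>2" unfolding \<sigma>2_def using Mx0 Dpos by simp
  have cohU: "real CARD('r) * coh_sub U / real CARD('d) = Mx"
    unfolding coh_sub_def Mx_def D_def by simp
  have GK: "G = {\<Omega>. (norm (Fw w \<Omega>))^2 \<le> K}"
    unfolding G_def K_def \<sigma>2_def cohU sp_Fw w_def L_def D_def by (simp add: mult.assoc)
  have finA: "finite A" unfolding A_def by (rule finite_lists)
  have cardA: "real (card A) = D^m" unfolding A_def D_def by (simp add: card_lists)
  have prob: "measure_pmf.prob (sample_lists m) G = 1 - real (card B) / D^m"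
  proof -
    have ne: "A \<noteq> {}" unfolding A_def by (auto intro: exI[of _ "replicate m undefined"])
    have "measure_pmf.prob (sample_lists m) G = real (card (A \<inter> G)) / real (card A)"
      unfolding sample_lists_def A_def[symmetric] using measure_pmf_of_set[OF ne finA] by simp
    moreover have "card A = card (A \<inter> G) + card B"
    proof -
      have "A = (A \<inter> G) \<union> B" "(A \<inter> G) \<inter> B = {}" unfolding B_def GK by auto
      then show ?thesis using finA by (metis card_Un_disjoint finite_Int finite_Un)
    qed
    ultimately show ?thesis using cardA Dpos by (simp add: field_simps)
  qed
  have M2s: "(\<Sum>xs\<in>A. (norm (Fw w xs))^2) \<le> D^m * \<sigma>2"
  proof -
    have "(\<Sum>xs\<in>A. (norm (Fw w xs))^2) = D^m * (real m / D * W)"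
      unfolding A_def M2[OF wz] W_def D_def by simp
    also have "\<dots> \<le> D^m * \<sigma>2" using mW Dpos by (intro mult_left_mono) auto
    finally show ?thesis .
  qed
  have BA: "B \<subseteq> A" unfolding B_def by auto
  have cardB: "real (card B) \<le> \<delta> * D^m"
  proof (cases "\<sigma>2 = 0")
    case True
    have "(\<Sum>xs\<in>A. (norm (Fw w xs))^2) = 0"
    proof -
      have "0 \<le> (\<Sum>xs\<in>A. (norm (Fw w xs))^2)" by (simp add: sum_nonneg)
      then show ?thesis using M2s True by simp
    qed
    then have "\<forall>xs\<in>A. (norm (Fw w xs))^2 = 0" using finA by (simp add: sum_nonneg_eq_0_iff)
    then have "B = {}" unfolding B_def K_def True by auto
    then show ?thesis using assms(4) Dpos by simp
  next
    case False
    then have \<sigma>pos: "0 < \<sigma>2" using \<sigma>0 by simp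
    show ?thesis
    proof (cases "L \<le> 4")
      case True
      have "real (card B) * K \<le> (\<Sum>xs\<in>B. (norm (Fw w xs))^2)"
        using sum_bounded_below[of B K "\<lambda>xs. (norm (Fw w xs))^2"] unfolding B_def by auto
      also have "\<dots> \<le> (\<Sum>xs\<in>A. (norm (Fw w xs))^2)"
        by (rule sum_mono2[OF finA BA]) simp
      also have "\<dots> \<le> D^m * \<sigma>2" by (rule M2s)
      finally have c: "real (card B) * ((1 + 2*L)^2 * \<sigma>2) \<le> D^m * \<sigma>2" unfolding K_def .
      have e: "exp L \<le> (1 + 2*L)^2" using exp_le_sq Lpos True by simp
      have "real (card B) * (1 + 2*L)^2 \<le> D^m" using c \<sigma>pos
        by (metis mult.assoc mult_le_cancel_right_pos)
      then have "real (card B) * exp L \<le> D^m"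
        by (meson e mult_left_mono of_nat_0_le_iff order.trans)
      then show ?thesis unfolding dL by (simp add: exp_minus field_simps)
    next
      case False
      then have L4: "4 \<le> L" by simp
      have mpos: "0 < m" using \<sigma>pos unfolding \<sigma>2_def by (cases m) auto
      have Mxpos: "0 < Mx" using \<sigma>pos Mx0 unfolding \<sigma>2_def by (cases "Mx = 0") auto
      have nvpos: "0 < norm v" using assms(3) by simp
      define lam where "lam = 2 * sqrt L / sqrt \<sigma>2"
      have lpos: "0 < lam" unfolding lam_def using \<sigma>pos Lpos by simp
      have l2: "lam^2 * \<sigma>2 = 4 * L" unfolding lam_def using \<sigma>pos Lpos by (simp add: power_divide power_mult_distrib)
      define w' where "w' = (\<lambda>a. lam *\<^sub>R w a)"
      have Fw': "Fw w' xs = lam *\<^sub>R Fw w xs" for xs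
        unfolding Fw_def w'_def by (simp add: scaleR_sum_right)
      have w'z: "(\<Sum>a\<in>UNIV. w' a) = 0" unfolding w'_def by (simp add: scaleR_sum_right[symmetric] wz)
      have w'b: "norm (w' a) \<le> 1" for a
      proof -
        have va: "(v $ a)^2 \<le> (infnorm v)^2"
          by (metis abs_ge_zero component_le_infnorm_cart power2_abs power_mono)
        have "(norm (w a))^2 \<le> (infnorm v)^2 * Mx"
          unfolding nw by (intro mult_mono va row_le_Max[OF orth, folded Mx_def]) auto
        then have "(norm (w' a))^2 \<le> lam^2 * ((infnorm v)^2 * Mx)"
          unfolding w'_def using lpos by (simp add: power_mult_distrib mult_left_mono)
        also have "\<dots> = 4 * L * coh_vec v / real m"
          using l2 \<sigma>pos Mxpos nvpos mpos Dpos
          unfolding coh_vec_def D_def[symmetric] \<sigma>2_def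
          by (simp add: field_simps)
        also have "\<dots> \<le> 1" using assms(6) mpos unfolding L_def by (simp add: field_simps)
        finally show ?thesis by (simp add: power_le_one_iff abs_square_le_1)
      qed
      have W': "(\<Sum>a\<in>UNIV. (norm (w' a))^2) = lam^2 * W"
        unfolding w'_def W_def using lpos by (simp add: power_mult_distrib sum_distrib_left)
      have P: "(\<Sum>xs\<in>A. cosh (lam * norm (Fw w xs))) \<le> (D + 11/8 * (lam^2 * W))^m"
        using Pin[OF w'z w'b, of m] unfolding W' Fw' A_def D_def using lpos by simp
      also have "\<dots> \<le> (D * exp (11/8 * (lam^2 * W) / D))^m"
      proof (rule power_mono)
        have "D + 11/8 * (lam^2 * W) = D * (1 + 11/8 * (lam^2 * W) / D)" using Dpos by (simp add: field_simps)
        also have "\<dots> \<le> D * exp (11/8 * (lam^2 * W) / D)"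
          using Dpos by (intro mult_left_mono exp_ge_add_one_self) simp_all
        finally show "D + 11/8 * (lam^2 * W) \<le> D * exp (11/8 * (lam^2 * W) / D)" .
        show "0 \<le> D + 11/8 * (lam^2 * W)" using Dpos W0 by simp
      qed
      also have "\<dots> = D^m * exp (11/8 * lam^2 * (real m / D * W))"
        by (simp add: power_mult_distrib exp_of_nat_mult[symmetric] field_simps)
      also have "\<dots> \<le> D^m * exp (11/8 * lam^2 * \<sigma>2)"
      proof -
        have "11/8*lam^2*(real m / D * W) \<le> 11/8*lam^2*\<sigma>2" by (rule mult_left_mono[OF mW]) simp
        then show ?thesis using Dpos by (intro mult_left_mono) simp_all
      qed
      also have "\<dots> = D^m * exp (11/2 * L)" using l2 by (simp add: mult.assoc)
      finally have up: "(\<Sum>xs\<in>A. cosh (lam * norm (Fw w xs))) \<le> D^m * exp (11/2 * L)" .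
      define T where "T = 2 * sqrt L * (1 + 2 * L)"
      have lb: "exp T / 2 \<le> cosh (lam * norm (Fw w xs))" if "xs \<in> B" for xs
      proof -
        have "((1 + 2*L) * sqrt \<sigma>2)^2 < (norm (Fw w xs))^2"
          using that \<sigma>pos Lpos unfolding B_def K_def by (simp add: power_mult_distrib)
        then have "(1 + 2*L) * sqrt \<sigma>2 < norm (Fw w xs)"
          by (rule power2_less_imp_less) simp
        then have "lam * ((1 + 2*L) * sqrt \<sigma>2) \<le> lam * norm (Fw w xs)"
          using lpos by simp
        moreover have "lam * ((1 + 2*L) * sqrt \<sigma>2) = T"
          unfolding lam_def T_def using \<sigma>pos by simp
        ultimately have "T \<le> lam * norm (Fw w xs)" by simp
        moreover have "0 \<le> T" unfolding T_def using Lpos by simp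
        ultimately have "cosh T \<le> cosh (lam * norm (Fw w xs))"
          using cosh_real_nonneg_le_iff lpos by simp
        moreover have "exp T / 2 \<le> cosh T" by (simp add: cosh_field_def)
        ultimately show ?thesis by simp
      qed
      have "real (card B) * (exp T / 2) \<le> (\<Sum>xs\<in>B. cosh (lam * norm (Fw w xs)))"
        using sum_bounded_below[of B "exp T / 2" "\<lambda>xs. cosh (lam * norm (Fw w xs))"] lb by auto
      also have "\<dots> \<le> (\<Sum>xs\<in>A. cosh (lam * norm (Fw w xs)))"
        by (rule sum_mono2[OF finA BA]) simp
      also have "\<dots> \<le> D^m * exp (11/2 * L)" by (rule up)
      finally have cb: "real (card B) * (exp T / 2) \<le> D^m * exp (11/2 * L)" .
      have "real (card B) \<le> D^m * (2 * exp (11/2 * L - T))"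
      proof -
        have "real (card B) * exp T \<le> 2 * D^m * exp (11/2 * L)" using cb by (simp add: field_simps)
        then have "real (card B) \<le> 2 * D^m * exp (11/2 * L) / exp T" by (simp add: pos_le_divide_eq)
        then show ?thesis by (simp add: exp_diff mult.assoc mult.left_commute)
      qed
      also have "\<dots> \<le> D^m * exp (-L)"
        using final_ineq[OF L4] Dpos unfolding T_def by (intro mult_left_mono) simp_all
      finally show ?thesis unfolding dL by (simp add: mult.commute)
    qed
  qed
  show ?thesis
    unfolding G_def[symmetric] prob using cardB Dpos by (simp add: field_simps)
qed

end
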